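(* Let $N \ge 1$ be an integer and let $(X_1, X_2, \dots, X_N)$ be a time-homogeneous Markov chain on the two-state space $\{S_0, S_1\}$ with initial distribution $\mathbb{P}(X_1 = S_0) = p_0$, $\mathbb{P}(X_1 = S_1) = p_1$ (where $p_0,p_1\ge 0$, $p_0+p_1=1$) and transition probabilities $p_{ij} = \mathbb{P}(X_{t+1} = S_j \mid X_t = S_i)$ for $i,j \in \{0,1\}$ (so $p_{00}+p_{01}=1$ and $p_{10}+p_{11}=1$). Let $N_1 = \#\{t \in \{1,\dots,N\} : X_t = S_1\}$ be the number of visits to $S_1$ (the initial state counts as a visit). Then for every integer $k$ with $0 \le k \le N$, $$\mathbb{P}(N_1 = k) = p_1\, \mathbb{P}_1(k,N \mid S_1) + p_0\, \mathbb{P}_2(k,N \mid S_0),$$ where $$\mathbb{P}_1(k,N\mid S_1) = \begin{cases} 0 & k=0,\\[2pt] \displaystyle\sum_{j=1}^{c_1(k,N)} \binom{k-1}{j-1} p_{11}^{k-j} p_{10}^{j} \binom{N-k-1}{j-1} p_{01}^{j-1} p_{00}^{N-k-j} + \sum_{j=1}^{c_2(k,N)} \binom{k-1}{j} p_{11}^{k-j-1} p_{10}^{j} \binom{N-k-1}{j-1} p_{01}^{j} p_{00}^{N-k-j} & 0<k<N,\\[2pt] p_{11}^{N-1} & k=N,\end{cases}$$ $$\mathbb{P}_2(k,N\mid S_0) = \begin{cases} p_{00}^{N-1} & k=0,\\[2pt] \displaystyle\sum_{j=1}^{c_1(k,N)} \binom{k-1}{j-1} p_{11}^{k-j} p_{10}^{j-1}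 \binom{N-k-1}{j-1} p_{01}^{j} p_{00}^{N-k-j} + \sum_{j=1}^{c_3(k,N)} \binom{k-1}{j-1} p_{11}^{k-j} p_{10}^{j} \binom{N-k-1}{j} p_{01}^{j} p_{00}^{N-k-j-1} & 0<k<N,\\[2pt] 0 & k=N,\end{cases}$$ with $c_1(k,N) = \min(k, N-k)$, $c_2(k,N) = \min(k-1, N-k)$, $c_3(k,N) = \min(k, N-k-1)$ (an empty sum is $0$, and $0^0 = 1$).
   Context: The chain consists of $N$ states $X_1,\dots,X_N$: the initial state $X_1$ is drawn from $(p_0,p_1)$ and is followed by $N-1$ transitions. $\mathbb{P}_1(k,N\mid S_1)$ is the probability that $N_1=k$ given $X_1=S_1$, and $\mathbb{P}_2(k,N\mid S_0)$ is the probability that $N_1=k$ given $X_1=S_0$; the displayed formulas give their explicit values. *)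

theory Defs
  imports "HOL-Probability.Probability"
begin

text \<open>States: False = S_0, True = S_1.\<close>

definition init_prob :: "real \<Rightarrow> real \<Rightarrow> bool \<Rightarrow> real" where
  "init_prob p0 p1 s = (if s then p1 else p0)"

definition trans_prob :: "real \<Rightarrow> real \<Rightarrow> real \<Rightarrow> real \<Rightarrow> bool \<Rightarrow> bool \<Rightarrow> real" where
  "trans_prob p00 p01 p10 p11 a b =
     (if a then (if b then p11 else p10) else (if b then p01 else p00))"

definition c1 :: "nat \<Rightarrow> nat \<Rightarrow> nat" where "c1 k N = min k (N - k)"
definition c2 :: "nat \<Rightarrow> nat \<Rightarrow> nat" where "c2 k N = min (k - 1) (N - k)"
definition c3 :: "nat \<Rightarrow> nat \<Rightarrow> nat" where "c3 k N = min k (N - k - 1)"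

definition P1 :: "real \<Rightarrow> real \<Rightarrow> real \<Rightarrow> real \<Rightarrow> nat \<Rightarrow> nat \<Rightarrow> real" where
  "P1 p00 p01 p10 p11 k N =
    (if k = 0 then 0
     else if k < N then
       (\<Sum>j=1..c1 k N. real ((k-1) choose (j-1)) * p11^(k-j) * p10^j
            * real ((N-k-1) choose (j-1)) * p01^(j-1) * p00^(N-k-j))
     + (\<Sum>j=1..c2 k N. real ((k-1) choose j) * p11^(k-j-1) * p10^j
            * real ((N-k-1) choose (j-1)) * p01^j * p00^(N-k-j))
     else if k = N then p11^(N-1) else 0)"

definition P2 :: "real \<Rightarrow> real \<Rightarrow> real \<Rightarrow> real \<Rightarrow> nat \<Rightarrow> nat \<Rightarrow> real" where
  "P2 p00 p01 p10 p11 k N =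
    (if k = 0 then p00^(N-1)
     else if k < N then
       (\<Sum>j=1..c1 k N. real ((k-1) choose (j-1)) * p11^(k-j) * p10^(j-1)
            * real ((N-k-1) choose (j-1)) * p01^j * p00^(N-k-j))
     + (\<Sum>j=1..c3 k N. real ((k-1) choose (j-1)) * p11^(k-j) * p10^j
            * real ((N-k-1) choose j) * p01^j * p00^(N-k-j-1))
     else 0)"

end

theory Submission imports Defs begin

fun ncomp :: "nat \<Rightarrow> nat \<Rightarrow> nat" where
  "ncomp 0 j = (if j = 0 then 1 else 0)"
| "ncomp (Suc a) 0 = 0"
| "ncomp (Suc a) (Suc j) = a choose j"

lemma comp_Suc_Suc: "ncomp (Suc a) (Suc j) = ncomp a (Suc j) + ncomp a j"
  by (cases a; cases j) auto

lemma comp_gt: "a < j \<Longrightarrow> ncomp a j = 0"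
  by (cases a; cases j) auto

lemma comp_eq: "0 < a \<Longrightarrow> 0 < j \<Longrightarrow> ncomp a j = (a-1) choose (j-1)"
  by (cases a; cases j) auto

lemma ncomp_0 [simp]: "0 < a \<Longrightarrow> ncomp a 0 = 0"
  by (cases a) auto

lemma comp_0_0: "0 < a + z \<Longrightarrow> real (ncomp a 0) * real (ncomp z 0) = 0"
  by (cases a; cases z) auto

lemma comp_pow: "real (ncomp a (Suc i)) * x ^ (a - i) = x * (real (ncomp a (Suc i)) * x ^ (a - Suc i))"
proof (cases "Suc i \<le> a")
  case True
  then have "a - i = Suc (a - Suc i)" by arith
  then show ?thesis by simp
next
  case False
  then show ?thesis by (simp add: comp_gt)
qed

fun wl :: "(bool \<Rightarrow> bool \<Rightarrow> real) \<Rightarrow> bool list \<Rightarrow> real" where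
  "wl T (x # y # zs) = T x y * wl T (y # zs)"
| "wl T _ = 1"

lemma wl_prod: "wl T xs = (\<Prod>t\<in>{1..<length xs}. T (xs!(t-1)) (xs!t))"
proof (induction T xs rule: wl.induct)
  case (1 T x y zs)
  have "(\<Prod>t\<in>{1..<length (x # y # zs)}. T ((x # y # zs)!(t-1)) ((x # y # zs)!t))
      = T x y * (\<Prod>t\<in>{Suc 1..<Suc (Suc (length zs))}. T ((x # y # zs)!(t-1)) ((x # y # zs)!t))"
    by (subst prod.atLeast_Suc_lessThan) auto
  also have "(\<Prod>t\<in>{Suc 1..<Suc (Suc (length zs))}. T ((x # y # zs)!(t-1)) ((x # y # zs)!t))
      = (\<Prod>t\<in>{1..<Suc (length zs)}. T ((x # y # zs)!t) ((x # y # zs)!(Suc t)))"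
    by (subst prod.shift_bounds_Suc_ivl) simp
  also have "\<dots> = (\<Prod>t\<in>{1..<length (y # zs)}. T ((y # zs)!(t-1)) ((y # zs)!t))"
    by (intro prod.cong) (auto simp: nth_Cons')
  finally show ?case using 1 by simp
qed auto

definition Gs :: "(bool \<Rightarrow> bool \<Rightarrow> real) \<Rightarrow> bool \<Rightarrow> nat \<Rightarrow> nat \<Rightarrow> real" where
  "Gs T b n k = (\<Sum>ys\<in>{ys::bool list. length ys = n}.
      if length (filter id (b # ys)) = k then wl T (b # ys) else 0)"

lemma fin_lists: "finite {ys::bool list. length ys = n}"
  using finite_lists_length_eq[of "UNIV::bool set" n] by simp

lemma sum_lists_Suc:
  "(\<Sum>xs\<in>{xs::bool list. length xs = Suc n}. f xs) =
   (\<Sum>zs\<in>{zs. length zs = n}. f (True # zs)) + (\<Sum>zs\<in>{zs. length zs = n}. f (False # zs))"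
proof -
  let ?L = "{zs::bool list. length zs = n}"
  have eq: "{xs::bool list. length xs = Suc n} = Cons True ` ?L \<union> Cons False ` ?L"
  proof (rule set_eqI, rule iffI)
    fix xs :: "bool list" assume "xs \<in> {xs. length xs = Suc n}"
    then obtain y ys where "xs = y # ys" "length ys = n" by (auto simp: length_Suc_conv)
    then show "xs \<in> Cons True ` ?L \<union> Cons False ` ?L" by (cases y) auto
  qed auto
  have "(\<Sum>xs\<in>{xs::bool list. length xs = Suc n}. f xs) = sum f (Cons True ` ?L) + sum f (Cons False ` ?L)"
    unfolding eq by (rule sum.union_disjoint) (auto intro: fin_lists)
  also have "\<dots> = (\<Sum>zs\<in>?L. f (True # zs)) + (\<Sum>zs\<in>?L. f (False # zs))"
    by (simp add: sum.reindex)
  finally show ?thesis .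
qed

lemma Gs_0: "Gs T b 0 k = (if (if b then 1 else 0) = k then 1 else 0)"
proof -
  have "{ys::bool list. length ys = 0} = {[]}" by auto
  then show ?thesis unfolding Gs_def by simp
qed

lemma Gs_big: "Suc n < k \<Longrightarrow> Gs T b n k = 0"
  unfolding Gs_def
proof (intro sum.neutral ballI)
  fix ys assume "Suc n < k" "ys \<in> {ys::bool list. length ys = n}"
  moreover have "length (filter id (b # ys)) \<le> length (b # ys)" by (rule length_filter_le)
  ultimately show "(if length (filter id (b # ys)) = k then wl T (b # ys) else 0) = 0" by auto
qed

lemma Gs_Suc_True: "Gs T True (Suc n) k =
   (if k = 0 then 0 else T True True * Gs T True n (k-1) + T True False * Gs T False n (k-1))"
proof (cases k)
  case 0
  then show ?thesis unfolding Gs_def by simp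
next
  case (Suc a)
  show ?thesis unfolding Gs_def sum_lists_Suc using Suc
    by (simp add: sum_distrib_left if_distrib cong: if_cong)
qed

lemma Gs_Suc_False: "Gs T False (Suc n) k =
   T False True * Gs T True n k + T False False * Gs T False n k"
  unfolding Gs_def sum_lists_Suc
  by (simp add: sum_distrib_left if_distrib cong: if_cong)

context fixes p00 p01 p10 p11 :: real begin

definition A1 :: "nat \<Rightarrow> nat \<Rightarrow> nat \<Rightarrow> real" where
  "A1 M a z = (\<Sum>j\<le>M. real (ncomp a j) * real (ncomp z j) * p11^(a-j) * p10^j * p01^(j-1) * p00^(z-j))"
definition B1 :: "nat \<Rightarrow> nat \<Rightarrow> nat \<Rightarrow> real" where
  "B1 M a z = (\<Sum>j\<le>M. real (ncomp a (Suc j)) * real (ncomp z j) * p11^(a - Suc j) * p10^j * p01^j * p00^(z-j))"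
definition A0 :: "nat \<Rightarrow> nat \<Rightarrow> nat \<Rightarrow> real" where
  "A0 M a z = (\<Sum>j\<le>M. real (ncomp a j) * real (ncomp z j) * p11^(a-j) * p10^(j-1) * p01^j * p00^(z-j))"
definition B0 :: "nat \<Rightarrow> nat \<Rightarrow> nat \<Rightarrow> real" where
  "B0 M a z = (\<Sum>j\<le>M. real (ncomp a j) * real (ncomp z (Suc j)) * p11^(a-j) * p10^j * p01^j * p00^(z - Suc j))"

lemma A1_rec:
  assumes "0 < a + z" "a + z < M"
  shows "A1 M (Suc a) z = p11 * A1 M a z + p10 * B0 M a z"
proof -
  obtain m where M: "M = Suc m" using assms by (cases M) auto
  have "A1 M (Suc a) z = (\<Sum>i<M. real (ncomp (Suc a) (Suc i)) * real (ncomp z (Suc i)) * p11^(a-i) * p10^(Suc i) * p01^i * p00^(z-Suc i))"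
    unfolding A1_def by (subst sum.atMost_shift) simp
  also have "\<dots> = (\<Sum>i<M. p11 * (real (ncomp a (Suc i)) * real (ncomp z (Suc i)) * p11^(a-Suc i) * p10^(Suc i) * p01^i * p00^(z-Suc i))
       + p10 * (real (ncomp a i) * real (ncomp z (Suc i)) * p11^(a-i) * p10^i * p01^i * p00^(z - Suc i)))"
  proof (rule sum.cong[OF refl])
    fix i
    have "real (ncomp a (Suc i)) * p11 ^ (a - i) = p11 * (real (ncomp a (Suc i)) * p11 ^ (a - Suc i))"
      by (rule comp_pow)
    then show "real (ncomp (Suc a) (Suc i)) * real (ncomp z (Suc i)) * p11^(a-i) * p10^(Suc i) * p01^i * p00^(z-Suc i) =
       p11 * (real (ncomp a (Suc i)) * real (ncomp z (Suc i)) * p11^(a-Suc i) * p10^(Suc i) * p01^i * p00^(z-Suc i))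
       + p10 * (real (ncomp a i) * real (ncomp z (Suc i)) * p11^(a-i) * p10^i * p01^i * p00^(z - Suc i))"
      unfolding comp_Suc_Suc of_nat_add by (simp add: algebra_simps) (metis (no_types, lifting) mult.assoc mult.commute)
  qed
  also have "\<dots> = p11 * A1 M a z + p10 * B0 M a z"
  proof -
    have 1: "A1 M a z = (\<Sum>i<M. real (ncomp a (Suc i)) * real (ncomp z (Suc i)) * p11^(a-Suc i) * p10^(Suc i) * p01^i * p00^(z-Suc i))"
      unfolding A1_def using comp_0_0[OF assms(1)] by (subst sum.atMost_shift) simp
    have 2: "B0 M a z = (\<Sum>i<M. real (ncomp a i) * real (ncomp z (Suc i)) * p11^(a-i) * p10^i * p01^i * p00^(z - Suc i))"
      unfolding B0_def using assms by (simp add: lessThan_Suc_atMost[symmetric] M comp_gt)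
    show ?thesis unfolding 1 2 by (simp add: sum.distrib sum_distrib_left)
  qed
  finally show ?thesis .
qed

lemma B1_rec:
  assumes "0 < a + z"
  shows "B1 M (Suc a) z = p11 * B1 M a z + p10 * A0 M a z"
  unfolding B1_def A0_def sum_distrib_left sum.distrib[symmetric]
proof (rule sum.cong[OF refl])
  fix j
  have h: "real (ncomp a (Suc j)) * p11 ^ (a - j) = p11 * (real (ncomp a (Suc j)) * p11 ^ (a - Suc j))"
    by (rule comp_pow)
  have h2: "real (ncomp a j) * real (ncomp z j) * p10 ^ j = p10 * (real (ncomp a j) * real (ncomp z j) * p10 ^ (j - 1))"
    using comp_0_0[OF assms] by (cases j) auto
  show "real (ncomp (Suc a) (Suc j)) * real (ncomp z j) * p11 ^ (Suc a - Suc j) * p10 ^ j * p01 ^ j * p00 ^ (z - j) =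
         p11 * (real (ncomp a (Suc j)) * real (ncomp z j) * p11 ^ (a - Suc j) * p10 ^ j * p01 ^ j * p00 ^ (z - j)) +
         p10 * (real (ncomp a j) * real (ncomp z j) * p11 ^ (a - j) * p10 ^ (j - 1) * p01 ^ j * p00 ^ (z - j))"
  proof -
    have "real (ncomp (Suc a) (Suc j)) * real (ncomp z j) * p11 ^ (Suc a - Suc j) * p10 ^ j * p01 ^ j * p00 ^ (z - j)
      = (real (ncomp a (Suc j)) * p11 ^ (a - j)) * real (ncomp z j) * p10 ^ j * p01 ^ j * p00 ^ (z - j)
        + (real (ncomp a j) * real (ncomp z j) * p10 ^ j) * p11 ^ (a - j) * p01 ^ j * p00 ^ (z - j)"
      unfolding comp_Suc_Suc of_nat_add by (simp add: algebra_simps)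
    also have "\<dots> = p11 * (real (ncomp a (Suc j)) * real (ncomp z j) * p11 ^ (a - Suc j) * p10 ^ j * p01 ^ j * p00 ^ (z - j)) +
         p10 * (real (ncomp a j) * real (ncomp z j) * p11 ^ (a - j) * p10 ^ (j - 1) * p01 ^ j * p00 ^ (z - j))"
      unfolding h h2 by (simp add: algebra_simps)
    finally show ?thesis .
  qed
qed

lemma B0_rec:
  assumes "0 < a + z"
  shows "B0 M a (Suc z) = p00 * B0 M a z + p01 * A1 M a z"
  unfolding B0_def A1_def sum_distrib_left sum.distrib[symmetric]
proof (rule sum.cong[OF refl])
  fix j
  have h: "real (ncomp z (Suc j)) * p00 ^ (z - j) = p00 * (real (ncomp z (Suc j)) * p00 ^ (z - Suc j))"
    by (rule comp_pow)
  have h2: "real (ncomp a j) * real (ncomp z j) * p01 ^ j = p01 * (real (ncomp a j) * real (ncomp z j) * p01 ^ (j - 1))"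
    using comp_0_0[OF assms] by (cases j) auto
  show "real (ncomp a j) * real (ncomp (Suc z) (Suc j)) * p11 ^ (a - j) * p10 ^ j * p01 ^ j * p00 ^ (Suc z - Suc j) =
         p00 * (real (ncomp a j) * real (ncomp z (Suc j)) * p11 ^ (a - j) * p10 ^ j * p01 ^ j * p00 ^ (z - Suc j)) +
         p01 * (real (ncomp a j) * real (ncomp z j) * p11 ^ (a - j) * p10 ^ j * p01 ^ (j - 1) * p00 ^ (z - j))"
  proof -
    have "real (ncomp a j) * real (ncomp (Suc z) (Suc j)) * p11 ^ (a - j) * p10 ^ j * p01 ^ j * p00 ^ (Suc z - Suc j)
      = (real (ncomp z (Suc j)) * p00 ^ (z - j)) * real (ncomp a j) * p11 ^ (a - j) * p10 ^ j * p01 ^ j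
        + (real (ncomp a j) * real (ncomp z j) * p01 ^ j) * p11 ^ (a - j) * p10 ^ j * p00 ^ (z - j)"
      unfolding comp_Suc_Suc of_nat_add by (simp add: algebra_simps)
    also have "\<dots> = p00 * (real (ncomp a j) * real (ncomp z (Suc j)) * p11 ^ (a - j) * p10 ^ j * p01 ^ j * p00 ^ (z - Suc j)) +
         p01 * (real (ncomp a j) * real (ncomp z j) * p11 ^ (a - j) * p10 ^ j * p01 ^ (j - 1) * p00 ^ (z - j))"
      unfolding h h2 by (simp add: algebra_simps)
    finally show ?thesis .
  qed
qed

lemma A0_rec:
  assumes "0 < a + z" "a + z < M"
  shows "A0 M a (Suc z) = p00 * A0 M a z + p01 * B1 M a z"
proof -
  obtain m where M: "M = Suc m" using assms by (cases M) auto
  have "A0 M a (Suc z) = (\<Sum>i<M. real (ncomp a (Suc i)) * real (ncomp (Suc z) (Suc i)) * p11^(a-Suc i) * p10^i * p01^(Suc i) * p00^(z-i))"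
    unfolding A0_def by (subst sum.atMost_shift) simp
  also have "\<dots> = (\<Sum>i<M. p00 * (real (ncomp a (Suc i)) * real (ncomp z (Suc i)) * p11^(a-Suc i) * p10^i * p01^(Suc i) * p00^(z-Suc i))
       + p01 * (real (ncomp a (Suc i)) * real (ncomp z i) * p11^(a - Suc i) * p10^i * p01^i * p00^(z - i)))"
  proof (rule sum.cong[OF refl])
    fix i
    have h: "real (ncomp z (Suc i)) * p00 ^ (z - i) = p00 * (real (ncomp z (Suc i)) * p00 ^ (z - Suc i))"
      by (rule comp_pow)
    have "real (ncomp a (Suc i)) * real (ncomp (Suc z) (Suc i)) * p11^(a-Suc i) * p10^i * p01^(Suc i) * p00^(z-i)
       = (real (ncomp z (Suc i)) * p00 ^ (z - i)) * real (ncomp a (Suc i)) * p11^(a-Suc i) * p10^i * p01^(Suc i)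
         + p01 * (real (ncomp a (Suc i)) * real (ncomp z i) * p11^(a - Suc i) * p10^i * p01^i * p00^(z - i))"
      unfolding comp_Suc_Suc of_nat_add by (simp add: algebra_simps)
    then show "real (ncomp a (Suc i)) * real (ncomp (Suc z) (Suc i)) * p11^(a-Suc i) * p10^i * p01^(Suc i) * p00^(z-i) =
       p00 * (real (ncomp a (Suc i)) * real (ncomp z (Suc i)) * p11^(a-Suc i) * p10^i * p01^(Suc i) * p00^(z-Suc i))
       + p01 * (real (ncomp a (Suc i)) * real (ncomp z i) * p11^(a - Suc i) * p10^i * p01^i * p00^(z - i))"
      unfolding h by (simp add: algebra_simps)
  qed
  also have "\<dots> = p00 * A0 M a z + p01 * B1 M a z"
  proof -
    have 1: "A0 M a z = (\<Sum>i<M. real (ncomp a (Suc i)) * real (ncomp z (Suc i)) * p11^(a-Suc i) * p10^i * p01^(Suc i) * p00^(z-Suc i))"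
      unfolding A0_def using comp_0_0[OF assms(1)] by (subst sum.atMost_shift) simp
    have 2: "B1 M a z = (\<Sum>i<M. real (ncomp a (Suc i)) * real (ncomp z i) * p11^(a - Suc i) * p10^i * p01^i * p00^(z - i))"
      unfolding B1_def using assms by (simp add: lessThan_Suc_atMost[symmetric] M comp_gt)
    show ?thesis unfolding 1 2 by (simp add: sum.distrib sum_distrib_left)
  qed
  finally show ?thesis .
qed

definition H1 where "H1 M a z = A1 M a z + B1 M a z"
definition H0 where "H0 M a z = A0 M a z + B0 M a z"

lemma H1_rec: "0 < a + z \<Longrightarrow> a + z < M \<Longrightarrow> H1 M (Suc a) z = p11 * H1 M a z + p10 * H0 M a z"
  unfolding H1_def H0_def using A1_rec B1_rec by (simp add: algebra_simps)

lemma H0_rec: "0 < a + z \<Longrightarrow> a + z < M \<Longrightarrow> H0 M a (Suc z) = p01 * H1 M a z + p00 * H0 M a z"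
  unfolding H1_def H0_def using A0_rec B0_rec by (simp add: algebra_simps)

lemma H1_a0: "0 < a \<Longrightarrow> H1 M a 0 = p11^(a-1)"
  unfolding H1_def A1_def B1_def
  by (cases a) (simp_all add: sum.atMost_shift)

lemma H0_a0: "0 < a \<Longrightarrow> H0 M a 0 = 0"
  unfolding H0_def A0_def B0_def
  by (cases a) (simp_all add: sum.atMost_shift)

lemma H1_0z: "0 < z \<Longrightarrow> H1 M 0 z = 0"
  unfolding H1_def A1_def B1_def
  by (cases z) (simp_all add: sum.atMost_shift)

lemma H0_0z: "0 < z \<Longrightarrow> H0 M 0 z = p00^(z-1)"
  unfolding H0_def A0_def B0_def
  by (cases z) (simp_all add: sum.atMost_shift)

lemma sum_restrict:
  fixes f g :: "nat \<Rightarrow> real"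
  assumes "c \<le> M" "f 0 = 0" "\<And>j. c < j \<Longrightarrow> f j = 0" "\<And>j. 1 \<le> j \<Longrightarrow> j \<le> c \<Longrightarrow> f j = g j"
  shows "(\<Sum>j\<le>M. f j) = (\<Sum>j=1..c. g j)"
proof -
  have z: "\<forall>i\<in>{..M} - {1..c}. f i = 0"
  proof
    fix i assume "i \<in> {..M} - {1..c}"
    then have "i = 0 \<or> c < i" by auto
    then show "f i = 0" using assms by auto
  qed
  have "(\<Sum>j=1..c. f j) = (\<Sum>j\<le>M. f j)"
    by (rule sum.mono_neutral_left[OF _ _ z]) (use assms in auto)
  then have "(\<Sum>j\<le>M. f j) = (\<Sum>j=1..c. f j)" by simp
  also have "\<dots> = (\<Sum>j=1..c. g j)" using assms by (intro sum.cong) auto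
  finally show ?thesis .
qed

lemma H1_P1:
  assumes "0 < k" "k < N" "c1 k N \<le> M" "c2 k N \<le> M"
  shows "H1 M k (N - k) = P1 p00 p01 p10 p11 k N"
proof -
  have 1: "A1 M k (N - k) = (\<Sum>j=1..c1 k N. real ((k-1) choose (j-1)) * p11^(k-j) * p10^j
            * real ((N-k-1) choose (j-1)) * p01^(j-1) * p00^(N-k-j))"
    unfolding A1_def
    by (rule sum_restrict) (use assms in \<open>auto simp: c1_def comp_gt comp_eq\<close>)
  have 2: "B1 M k (N - k) = (\<Sum>j=1..c2 k N. real ((k-1) choose j) * p11^(k-j-1) * p10^j
            * real ((N-k-1) choose (j-1)) * p01^j * p00^(N-k-j))"
    unfolding B1_def
    by (rule sum_restrict) (use assms in \<open>auto simp: c2_def comp_gt comp_eq\<close>)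
  show ?thesis unfolding H1_def P1_def 1 2 using assms by simp
qed

lemma H0_P2:
  assumes "0 < k" "k < N" "c1 k N \<le> M" "c3 k N \<le> M"
  shows "H0 M k (N - k) = P2 p00 p01 p10 p11 k N"
proof -
  have 1: "A0 M k (N - k) = (\<Sum>j=1..c1 k N. real ((k-1) choose (j-1)) * p11^(k-j) * p10^(j-1)
            * real ((N-k-1) choose (j-1)) * p01^j * p00^(N-k-j))"
    unfolding A0_def
    by (rule sum_restrict) (use assms in \<open>auto simp: c1_def comp_gt comp_eq\<close>)
  have 2: "B0 M k (N - k) = (\<Sum>j=1..c3 k N. real ((k-1) choose (j-1)) * p11^(k-j) * p10^j
            * real ((N-k-1) choose j) * p01^j * p00^(N-k-j-1))"
    unfolding B0_def
    by (rule sum_restrict) (use assms in \<open>auto simp: c3_def comp_gt comp_eq\<close>)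
  show ?thesis unfolding H0_def P2_def 1 2 using assms by simp
qed

lemma Gs_H:
  "n < M \<Longrightarrow> k \<le> Suc n \<Longrightarrow>
   Gs (trans_prob p00 p01 p10 p11) True n k = H1 M k (Suc n - k) \<and>
   Gs (trans_prob p00 p01 p10 p11) False n k = H0 M k (Suc n - k)"
proof (induction n arbitrary: k)
  case 0
  then have "k = 0 \<or> k = 1" by auto
  then show ?case
    by (auto simp: Gs_0 H1_0z H0_0z H1_a0 H0_a0)
next
  case (Suc n)
  let ?T = "trans_prob p00 p01 p10 p11"
  have t: "Gs ?T True (Suc n) k = H1 M k (Suc (Suc n) - k)"
  proof (cases k)
    case 0
    then show ?thesis by (simp add: Gs_Suc_True H1_0z)
  next
    case (Suc a)
    with Suc.prems have a: "a \<le> Suc n" by simp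
    from Suc.IH[OF _ a] Suc.prems
    have ih: "Gs ?T True n a = H1 M a (Suc n - a)" "Gs ?T False n a = H0 M a (Suc n - a)" by auto
    have "H1 M (Suc a) (Suc n - a) = p11 * H1 M a (Suc n - a) + p10 * H0 M a (Suc n - a)"
      by (rule H1_rec) (use a Suc.prems in auto)
    then show ?thesis using Suc ih by (simp add: Gs_Suc_True trans_prob_def)
  qed
  have f: "Gs ?T False (Suc n) k = H0 M k (Suc (Suc n) - k)"
  proof (cases "k \<le> Suc n")
    case True
    from Suc.IH[OF _ True] Suc.prems
    have ih: "Gs ?T True n k = H1 M k (Suc n - k)" "Gs ?T False n k = H0 M k (Suc n - k)" by auto
    have "H0 M k (Suc (Suc n - k)) = p01 * H1 M k (Suc n - k) + p00 * H0 M k (Suc n - k)"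
      by (rule H0_rec) (use True Suc.prems in auto)
    moreover have "Suc (Suc n) - k = Suc (Suc n - k)" using True by arith
    ultimately show ?thesis using ih by (simp add: Gs_Suc_False trans_prob_def)
  next
    case False
    then have "k = Suc (Suc n)" using Suc.prems by simp
    then show ?thesis by (simp add: Gs_Suc_False Gs_big H0_a0)
  qed
  show ?case using t f by simp
qed

end

theorem theorem1:
  fixes M :: "'a measure" and X :: "nat \<Rightarrow> 'a \<Rightarrow> bool"
    and N k :: nat and p0 p1 p00 p01 p10 p11 :: real
  assumes "prob_space M"
    and "N \<ge> 1"
    and "p0 \<ge> 0" "p1 \<ge> 0" "p0 + p1 = 1"
    and "p00 \<ge> 0" "p01 \<ge> 0" "p10 \<ge> 0" "p11 \<ge> 0"
    and "p00 + p01 = 1" "p10 + p11 = 1"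
    and rv: "\<And>t. t \<in> {1..N} \<Longrightarrow> X t \<in> measurable M (count_space UNIV)"
    and markov: "\<And>s :: nat \<Rightarrow> bool.
       measure M {\<omega> \<in> space M. \<forall>t\<in>{1..N}. X t \<omega> = s t}
       = init_prob p0 p1 (s 1) * (\<Prod>t\<in>{1..<N}. trans_prob p00 p01 p10 p11 (s t) (s (Suc t)))"
    and "k \<le> N"
  shows "measure M {\<omega> \<in> space M. card {t \<in> {1..N}. X t \<omega>} = k}
         = p1 * P1 p00 p01 p10 p11 k N + p0 * P2 p00 p01 p10 p11 k N"
proof -
  interpret prob_space M by fact
  define T where "T = trans_prob p00 p01 p10 p11"
  define L where "L = {xs::bool list. length xs = N \<and> length (filter id xs) = k}"
  define C where "C xs = {\<omega> \<in> space M. \<forall>t\<in>{1..N}. X t \<omega> = xs!(t-1)}" for xs :: "bool list"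
  obtain n where n: "N = Suc n" using assms(2) by (cases N) auto
  have Leq: "L = {xs \<in> {xs::bool list. length xs = N}. length (filter id xs) = k}"
    unfolding L_def by auto
  have finL: "finite L" unfolding Leq using fin_lists by simp
  have cardeq: "card {t \<in> {1..N}. xs!(t-1)} = length (filter id xs)" if "length xs = N" for xs :: "bool list"
  proof -
    have "{t \<in> {1..N}. xs!(t-1)} = Suc ` {i. i < length xs \<and> id (xs!i)}"
    proof (rule set_eqI, rule iffI)
      fix t assume t: "t \<in> {t \<in> {1..N}. xs!(t-1)}"
      then have "t = Suc (t - 1)" by auto
      moreover have "t - 1 \<in> {i. i < length xs \<and> id (xs!i)}" using t that by auto
      ultimately show "t \<in> Suc ` {i. i < length xs \<and> id (xs!i)}" by (rule image_eqI)
    qed (use that in auto)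
    then have "card {t \<in> {1..N}. xs!(t-1)} = card {i. i < length xs \<and> id (xs!i)}"
      by (simp add: card_image)
    then show ?thesis by (simp add: length_filter_conv_card)
  qed
  have E: "{\<omega> \<in> space M. card {t \<in> {1..N}. X t \<omega>} = k} = (\<Union>xs\<in>L. C xs)"
  proof (rule set_eqI, rule iffI)
    fix \<omega> assume w: "\<omega> \<in> {\<omega> \<in> space M. card {t \<in> {1..N}. X t \<omega>} = k}"
    define xs where "xs = map (\<lambda>t. X t \<omega>) [1..<Suc N]"
    have len: "length xs = N" unfolding xs_def by simp
    have nth: "xs!(t-1) = X t \<omega>" if "t \<in> {1..N}" for t
      unfolding xs_def using that by (auto simp: nth_map_upt simp del: upt_Suc) 
    have "{t \<in> {1..N}. xs!(t-1)} = {t \<in> {1..N}. X t \<omega>}" using nth by auto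
    then have "length (filter id xs) = k" using cardeq[OF len] w by simp
    then have "xs \<in> L" using len unfolding L_def by simp
    moreover have "\<omega> \<in> C xs" using w nth unfolding C_def by auto
    ultimately show "\<omega> \<in> (\<Union>xs\<in>L. C xs)" by blast
  next
    fix \<omega> assume "\<omega> \<in> (\<Union>xs\<in>L. C xs)"
    then obtain xs where xs: "xs \<in> L" "\<omega> \<in> C xs" by blast
    then have "{t \<in> {1..N}. X t \<omega>} = {t \<in> {1..N}. xs!(t-1)}" unfolding C_def by auto
    then show "\<omega> \<in> {\<omega> \<in> space M. card {t \<in> {1..N}. X t \<omega>} = k}"
      using xs cardeq unfolding L_def C_def by auto
  qed
  have meas: "C ` L \<subseteq> sets M"
  proof
    fix A assume "A \<in> C ` L"
    then obtain xs where A: "A = C xs" by blast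
    have "{\<omega> \<in> space M. X t \<omega> = xs!(t-1)} \<in> sets M" if "t \<in> {1..N}" for t
    proof -
      have "{\<omega> \<in> space M. X t \<omega> = xs!(t-1)} = X t -` {xs!(t-1)} \<inter> space M" by auto
      then show ?thesis using measurable_sets[OF rv[OF that], of "{xs!(t-1)}"] by simp
    qed
    then show "A \<in> sets M" unfolding A C_def
      by (intro sets.sets_Collect_finite_All) auto
  qed
  have disj: "disjoint_family_on C L"
    unfolding disjoint_family_on_def
  proof (intro ballI impI)
    fix xs ys assume xs: "xs \<in> L" and ys: "ys \<in> L" and ne: "xs \<noteq> ys"
    have lx: "length xs = N" and ly: "length ys = N" using xs ys unfolding L_def by auto
    have "\<exists>i<N. xs!i \<noteq> ys!i"
    proof (rule ccontr)
      assume "\<not> (\<exists>i<N. xs!i \<noteq> ys!i)"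
      then have "xs = ys" using lx ly by (intro nth_equalityI) auto
      with ne show False by simp
    qed
    then obtain i where i: "i < N" "xs!i \<noteq> ys!i" by blast
    show "C xs \<inter> C ys = {}"
    proof (rule ccontr)
      assume "C xs \<inter> C ys \<noteq> {}"
      then obtain \<omega> where "\<omega> \<in> C xs" "\<omega> \<in> C ys" by blast
      moreover have si: "Suc i \<in> {1..N}" using i by auto
      ultimately have "X (Suc i) \<omega> = xs!(Suc i - 1)" "X (Suc i) \<omega> = ys!(Suc i - 1)"
        unfolding C_def by blast+
      then have "X (Suc i) \<omega> = xs!i" "X (Suc i) \<omega> = ys!i" by simp_all
      then show False using i by simp
    qed
  qed
  have "measure M (\<Union>xs\<in>L. C xs) = (\<Sum>xs\<in>L. measure M (C xs))"
    by (rule finite_measure_finite_Union[OF finL meas disj])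
  also have "\<dots> = (\<Sum>xs\<in>L. init_prob p0 p1 (hd xs) * wl T xs)"
  proof (intro sum.cong refl)
    fix xs assume "xs \<in> L"
    then have len: "length xs = N" unfolding L_def by simp
    have "measure M (C xs) = init_prob p0 p1 (xs!(1-1)) * (\<Prod>t\<in>{1..<N}. T (xs!(t-1)) (xs!(Suc t - 1)))"
      unfolding C_def T_def by (rule markov)
    also have "\<dots> = init_prob p0 p1 (hd xs) * wl T xs"
    proof -
      have "hd xs = xs!0" using len n by (cases xs) auto
      then show ?thesis using len by (simp add: wl_prod)
    qed
    finally show "measure M (C xs) = init_prob p0 p1 (hd xs) * wl T xs" .
  qed
  also have "\<dots> = p1 * Gs T True n k + p0 * Gs T False n k"
  proof -
    have "(\<Sum>xs\<in>L. init_prob p0 p1 (hd xs) * wl T xs) =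
      (\<Sum>xs\<in>{xs::bool list. length xs = Suc n}. if length (filter id xs) = k then init_prob p0 p1 (hd xs) * wl T xs else 0)"
      unfolding Leq n by (rule sum.inter_filter[OF fin_lists])
    also have "\<dots> = p1 * Gs T True n k + p0 * Gs T False n k"
      unfolding sum_lists_Suc Gs_def
      by (simp add: sum_distrib_left init_prob_def if_distrib cong: if_cong)
    finally show ?thesis .
  qed
  also have "\<dots> = p1 * H1 p00 p01 p10 p11 N k (N - k) + p0 * H0 p00 p01 p10 p11 N k (N - k)"
    using Gs_H[of n N k p00 p01 p10 p11] assms n unfolding T_def by simp
  also have "\<dots> = p1 * P1 p00 p01 p10 p11 k N + p0 * P2 p00 p01 p10 p11 k N"
  proof -
    consider "k = 0" | "k = N" | "0 < k \<and> k < N" using assms by linarith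
    then show ?thesis
    proof cases
      case 1 then show ?thesis using n by (simp add: H1_0z H0_0z P1_def P2_def)
    next
      case 2 then show ?thesis using n by (simp add: H1_a0 H0_a0 P1_def P2_def)
    next
      case 3 then show ?thesis
        by (simp add: H1_P1 H0_P2 c1_def c2_def c3_def)
    qed
  qed
  finally show ?thesis using E by simp
qed

end
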